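(* Let $a,b,c,p\in\mathbb{C}$ with $-c\notin\mathbb{N}\cup\{0\}$. Define $(u_n)$ and $(v_n)$ by $u_0=1$, $u_1=\frac{ab}{c}+ip$, $u_2=\frac{iabp}{c}+\frac{a(a+1)b(b+1)}{2c(c+1)}-\frac{p^2}{2}$, $v_0=1$, $v_1=\frac{ab}{c}-ip$, $v_2=-\frac{iabp}{c}+\frac{a(a+1)b(b+1)}{2c(c+1)}-\frac{p^2}{2}$, and for all integers $n\ge2$, \[ u_{n+1}=\frac{(a+n)(b+n)+ip(c+2n)}{(n+1)(c+n)}u_n+\frac{p\left(p-i(a+b+2n-1)\right)}{(n+1)(c+n)}u_{n-1}-\frac{p^2}{(n+1)(c+n)}u_{n-2}, \] \[ v_{n+1}=\frac{(a+n)(b+n)-ip(c+2n)}{(n+1)(c+n)}v_n+\frac{p\left(p+i(a+b+2n-1)\right)}{(n+1)(c+n)}v_{n-1}-\frac{p^2}{(n+1)(c+n)}v_{n-2}. \] Then \[ \sin(pz)F(a,b;c;z)=\sum_{n=0}^\infty\frac{u_n-v_n}{2i}z^n,\qquad |z|<1. \]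
   Context: Here $i$ is the imaginary unit. For $a\in\mathbb{C}$, $(a)_n=a(a+1)\cdots(a+n-1)$ denotes the Pochhammer symbol, with $(a)_0=1$. For $a,b,c\in\mathbb{C}$ with $-c\notin\mathbb{N}\cup\{0\}$, the Gaussian hypergeometric function is $F(a,b;c;z)=\sum_{n=0}^\infty \frac{(a)_n(b)_n}{(c)_n\,n!}z^n$, $|z|<1$. *)

theory Defs
  imports Complex_Main
begin

definition hyp2F1 :: "complex \<Rightarrow> complex \<Rightarrow> complex \<Rightarrow> complex \<Rightarrow> complex" where
  "hyp2F1 a b c z =
     (\<Sum>n. pochhammer a n * pochhammer b n / (pochhammer c n * fact n) * z ^ n)"

fun useq :: "complex \<Rightarrow> complex \<Rightarrow> complex \<Rightarrow> complex \<Rightarrow> nat \<Rightarrow> complex" where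
  "useq a b c p 0 = 1"
| "useq a b c p (Suc 0) = a * b / c + \<i> * p"
| "useq a b c p (Suc (Suc 0)) =
     \<i> * a * b * p / c + a * (a + 1) * b * (b + 1) / (2 * c * (c + 1)) - p ^ 2 / 2"
| "useq a b c p (Suc (Suc (Suc m))) =
     (let n = of_nat (m + 2) :: complex in
        ((a + n) * (b + n) + \<i> * p * (c + 2 * n)) / ((n + 1) * (c + n)) * useq a b c p (Suc (Suc m))
      + p * (p - \<i> * (a + b + 2 * n - 1)) / ((n + 1) * (c + n)) * useq a b c p (Suc m)
      - p ^ 2 / ((n + 1) * (c + n)) * useq a b c p m)"

fun vseq :: "complex \<Rightarrow> complex \<Rightarrow> complex \<Rightarrow> complex \<Rightarrow> nat \<Rightarrow> complex" where
  "vseq a b c p 0 = 1"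
| "vseq a b c p (Suc 0) = a * b / c - \<i> * p"
| "vseq a b c p (Suc (Suc 0)) =
     - \<i> * a * b * p / c + a * (a + 1) * b * (b + 1) / (2 * c * (c + 1)) - p ^ 2 / 2"
| "vseq a b c p (Suc (Suc (Suc m))) =
     (let n = of_nat (m + 2) :: complex in
        ((a + n) * (b + n) - \<i> * p * (c + 2 * n)) / ((n + 1) * (c + n)) * vseq a b c p (Suc (Suc m))
      + p * (p + \<i> * (a + b + 2 * n - 1)) / ((n + 1) * (c + n)) * vseq a b c p (Suc m)
      - p ^ 2 / ((n + 1) * (c + n)) * vseq a b c p m)"

end

theory Submission imports Defs "HOL-Analysis.Complex_Transcendental" "HOL-Computational_Algebra.Formal_Power_Series" begin

definition fco :: "complex \<Rightarrow> complex \<Rightarrow> complex \<Rightarrow> nat \<Rightarrow> complex" where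
  "fco a b c n = pochhammer a n * pochhammer b n / (pochhammer c n * fact n)"

lemma fco_Suc:
  assumes "\<forall>k::nat. c \<noteq> - of_nat k"
  shows "fco a b c (Suc n) = fco a b c n * ((a + of_nat n) * (b + of_nat n)) / ((of_nat n + 1) * (c + of_nat n))"
proof -
  have c: "c + of_nat k \<noteq> 0" for k using assms by (metis add.commute add_eq_0_iff)
  have "pochhammer c n \<noteq> 0" using c by (simp add: pochhammer_eq_0_iff) (metis add.commute add_eq_0_iff assms)
  then show ?thesis using c[of n]
    by (simp add: fco_def pochhammer_rec' field_simps)
qed

lemma fco_ode:
  assumes "\<forall>k::nat. c \<noteq> - of_nat k"
  shows "(of_nat n + 1) * (c + of_nat n) * fco a b c (Suc n) = (a + of_nat n) * (b + of_nat n) * fco a b c n"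
proof -
  have c: "c + of_nat k \<noteq> 0" for k using assms by (metis add.commute add_eq_0_iff)
  have "(of_nat n + 1::complex) \<noteq> 0" by (metis of_nat_Suc of_nat_eq_0_iff add.commute nat.distinct(1))
  then show ?thesis using c[of n] by (simp add: fco_Suc[OF assms])
qed

lemma LF:
  fixes a b c :: complex
  assumes "\<forall>k::nat. c \<noteq> - of_nat k"
  defines "F \<equiv> Abs_fps (fco a b c)"
  shows "fps_X * fps_deriv (fps_deriv F) - fps_X * (fps_X * fps_deriv (fps_deriv F)) + fps_const c * fps_deriv F - fps_const (a+b+1) * (fps_X * fps_deriv F) - fps_const (a*b) * F = 0" (is "?L = 0")
proof (rule fps_ext)
  fix n
  have e: "(of_nat k + 1) * (c + of_nat k) * fco a b c (Suc k) = (a + of_nat k) * (b + of_nat k) * fco a b c k" for k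
    by (rule fco_ode[OF assms(1)])
  show "fps_nth ?L n = fps_nth 0 n"
  proof (cases n)
    case 0 then show ?thesis using e[of 0] by (simp add: F_def)
  next
    case (Suc m) note n = this
    show ?thesis
    proof (cases m)
      case 0 then show ?thesis using e[of 1] n by (simp add: F_def) (simp add: algebra_simps)
    next
      case (Suc k) then show ?thesis using e[of "k+2"] n by (simp add: F_def) (simp add: algebra_simps)
    qed
  qed
qed

lemma MG:
  fixes a b c q :: complex
  assumes "\<forall>k::nat. c \<noteq> - of_nat k"
  defines "F \<equiv> Abs_fps (fco a b c)"
  defines "G \<equiv> fps_exp q * F"
  shows "fps_X * (fps_deriv (fps_deriv G) - fps_const (2*q) * fps_deriv G + fps_const (q^2) * G)
    - fps_X * (fps_X * (fps_deriv (fps_deriv G) - fps_const (2*q) * fps_deriv G + fps_const (q^2) * G))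
    + fps_const c * (fps_deriv G - fps_const q * G)
    - fps_const (a+b+1) * (fps_X * (fps_deriv G - fps_const q * G)) - fps_const (a*b) * G = 0"
proof -
  let ?E = "fps_exp q"
  have d1: "fps_deriv G = fps_const q * G + ?E * fps_deriv F"
    unfolding G_def fps_deriv_mult fps_exp_deriv by (simp add: mult.assoc)
  have G1: "fps_deriv G - fps_const q * G = ?E * fps_deriv F"
    unfolding d1 by simp
  have d2: "fps_deriv (fps_deriv G) = fps_const q * fps_deriv G + fps_const q * (?E * fps_deriv F) + ?E * fps_deriv (fps_deriv F)"
  proof -
    have "fps_deriv (fps_deriv G) = fps_deriv (fps_const q * G + ?E * fps_deriv F)"
      using d1 by (rule arg_cong)
    also have "\<dots> = fps_const q * fps_deriv G + fps_deriv (?E * fps_deriv F)"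
      by (simp only: fps_deriv_add fps_deriv_mult_const_left)
    also have "fps_deriv (?E * fps_deriv F) = fps_const q * (?E * fps_deriv F) + ?E * fps_deriv (fps_deriv F)"
      unfolding fps_deriv_mult fps_exp_deriv by (simp add: mult.assoc)
    finally show ?thesis by (simp only: add.assoc)
  qed
  have c2: "fps_const (2*q) = fps_const q + fps_const q" "fps_const (q^2) = fps_const q * fps_const q"
    by (metis fps_const_add mult_2) (metis fps_const_mult power2_eq_square)
  have G2: "fps_deriv (fps_deriv G) - fps_const (2*q) * fps_deriv G + fps_const (q^2) * G = ?E * fps_deriv (fps_deriv F)"
    unfolding c2 d2 
  proof -
    show "fps_const q * fps_deriv G + fps_const q * (?E * fps_deriv F) + ?E * fps_deriv (fps_deriv F) -
    (fps_const q + fps_const q) * fps_deriv G + fps_const q * fps_const q * G = ?E * fps_deriv (fps_deriv F)"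
      unfolding d1 by algebra
  qed
  have L: "fps_X * fps_deriv (fps_deriv F) - fps_X * (fps_X * fps_deriv (fps_deriv F)) + fps_const c * fps_deriv F - fps_const (a+b+1) * (fps_X * fps_deriv F) - fps_const (a*b) * F = 0"
    unfolding F_def by (rule LF[OF assms(1)])
  have "?E * (fps_X * fps_deriv (fps_deriv F) - fps_X * (fps_X * fps_deriv (fps_deriv F)) + fps_const c * fps_deriv F - fps_const (a+b+1) * (fps_X * fps_deriv F) - fps_const (a*b) * F) = 0"
    unfolding L by simp
  moreover have G0: "fps_const (a*b) * G = ?E * (fps_const (a*b) * F)" unfolding G_def by (rule mult.left_commute)
  ultimately show ?thesis unfolding G1 G2 G0 by algebra
qed
lemma grec:
  fixes a b c q :: complex
  assumes "\<forall>k::nat. c \<noteq> - of_nat k"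
  defines "G \<equiv> fps_exp q * Abs_fps (fco a b c)"
  shows "fps_nth G (Suc (Suc (Suc k))) = (let n = of_nat (k + 2) :: complex in
        ((a + n) * (b + n) + q * (c + 2 * n)) / ((n + 1) * (c + n)) * fps_nth G (Suc (Suc k))
      + (- q * (a + b + 2 * n - 1) - q^2) / ((n + 1) * (c + n)) * fps_nth G (Suc k)
      + q ^ 2 / ((n + 1) * (c + n)) * fps_nth G k)"
proof -
  define n :: complex where "n = of_nat (k+2)"
  have c: "c + n \<noteq> 0" unfolding n_def using assms(1) by (metis add.commute add_eq_0_iff)
  have n1: "n + 1 \<noteq> 0" unfolding n_def by (metis of_nat_Suc of_nat_eq_0_iff add.commute nat.distinct(1))
  have M: "fps_X * (fps_deriv (fps_deriv G) - fps_const (2*q) * fps_deriv G + fps_const (q^2) * G)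
    - fps_X * (fps_X * (fps_deriv (fps_deriv G) - fps_const (2*q) * fps_deriv G + fps_const (q^2) * G))
    + fps_const c * (fps_deriv G - fps_const q * G)
    - fps_const (a+b+1) * (fps_X * (fps_deriv G - fps_const q * G)) - fps_const (a*b) * G = 0"
    (is "?M = 0") unfolding G_def by (rule MG[OF assms(1)])
  have "fps_nth ?M (Suc (Suc k)) = (n+1)*(c+n) * fps_nth G (Suc (Suc (Suc k))) - (((a + n) * (b + n) + q * (c + 2 * n)) * fps_nth G (Suc (Suc k))
      + (- q * (a + b + 2 * n - 1) - q^2) * fps_nth G (Suc k) + q ^ 2 * fps_nth G k)"
    unfolding n_def apply simp
    apply (simp add: algebra_simps power2_eq_square)
    done
  then have "(n+1)*(c+n) * fps_nth G (Suc (Suc (Suc k))) = (((a + n) * (b + n) + q * (c + 2 * n)) * fps_nth G (Suc (Suc k))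
      + (- q * (a + b + 2 * n - 1) - q^2) * fps_nth G (Suc k) + q ^ 2 * fps_nth G k)"
    using M by simp
  then have x: "fps_nth G (Suc (Suc (Suc k))) = (((a + n) * (b + n) + q * (c + 2 * n)) * fps_nth G (Suc (Suc k))
      + (- q * (a + b + 2 * n - 1) - q^2) * fps_nth G (Suc k) + q ^ 2 * fps_nth G k) / ((n+1)*(c+n))"
    using c n1 by (simp add: eq_divide_eq mult.commute)
  show ?thesis unfolding n_def[symmetric] Let_def x by (simp only: times_divide_eq_left) (simp only: add_divide_distrib)
qed

lemma cnz: fixes c :: complex assumes "\<forall>k::nat. c \<noteq> - of_nat k" shows "c + of_nat k \<noteq> 0"
proof
  assume "c + of_nat k = 0"
  then have "c = - of_nat k" by (simp add: eq_neg_iff_add_eq_0)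
  with assms show False by blast
qed

lemma gnth: "fps_nth (fps_exp q * Abs_fps (fco a b c)) n = (\<Sum>i=0..n. q^i / fact i * fco a b c (n-i))"
  by (simp add: fps_mult_nth)

lemma g012:
  fixes a b c q :: complex
  assumes "\<forall>k::nat. c \<noteq> - of_nat k"
  defines "G \<equiv> fps_exp q * Abs_fps (fco a b c)"
  shows "fps_nth G 0 = 1" "fps_nth G 1 = a * b / c + q"
    "fps_nth G 2 = q * a * b / c + a * (a + 1) * b * (b + 1) / (2 * c * (c + 1)) + q ^ 2 / 2"
proof -
  have c0: "c \<noteq> 0" using cnz[OF assms(1), of 0] by simp
  have c1: "c + 1 \<noteq> 0" using cnz[OF assms(1), of 1] by simp
  show "fps_nth G 0 = 1" by (simp add: G_def fco_def)
  show "fps_nth G 1 = a * b / c + q" unfolding G_def gnth using c0 by (simp add: fco_def)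
  show "fps_nth G 2 = q * a * b / c + a * (a + 1) * b * (b + 1) / (2 * c * (c + 1)) + q ^ 2 / 2"
  proof -
    have f1: "fco a b c 1 = a * b / c" by (simp add: fco_def)
    have f2: "fco a b c 2 = a * (a + 1) * b * (b + 1) / (2 * c * (c + 1))"
      by (simp add: fco_def numeral_2_eq_2 pochhammer_Suc mult_ac)
    have "fps_nth G 2 = fco a b c 2 + q * fco a b c 1 + q^2 / 2"
      unfolding G_def gnth by (simp add: numeral_2_eq_2 fco_def)
    then show ?thesis unfolding f1 f2 by simp
  qed
qed

lemma u_eq:
  fixes a b c p :: complex
  assumes "\<forall>k::nat. c \<noteq> - of_nat k"
  shows "useq a b c p n = fps_nth (fps_exp (\<i>*p) * Abs_fps (fco a b c)) n"
proof (induction n rule: less_induct)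
  case (less n)
  let ?G = "fps_exp (\<i>*p) * Abs_fps (fco a b c)"
  show ?case
  proof (cases n)
    case 0 then show ?thesis using g012[OF assms] by simp
  next
    case (Suc n1)
    show ?thesis
    proof (cases n1)
      case 0 then show ?thesis using g012[OF assms, of "\<i>*p"] Suc by simp
    next
      case (Suc n2) note n1 = \<open>n = Suc n1\<close>
      show ?thesis
      proof (cases n2)
        case 0 then show ?thesis using g012[OF assms, of "\<i>*p"] Suc n1
        proof -
          have sq: "(\<i>*p)^2 = -(p^2)" by (simp add: power_mult_distrib)
          have "n = 2" using 0 Suc n1 by simp
          then show ?thesis using g012(3)[OF assms, of "\<i>*p" a b] unfolding sq
            by (simp add: numeral_2_eq_2 mult_ac)
        qed
      next
        case (Suc m)
        have n: "n = Suc (Suc (Suc m))" using Suc \<open>n1 = Suc n2\<close> n1 by simp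
        have IH: "useq a b c p m = fps_nth ?G m" "useq a b c p (Suc m) = fps_nth ?G (Suc m)"
          "useq a b c p (Suc (Suc m)) = fps_nth ?G (Suc (Suc m))" using less n by auto
        show ?thesis
        proof -
          have sq: "(\<i>*p)^2 = -(p^2)" by (simp add: power_mult_distrib)
          have e2: "- (\<i>*p) * x - (\<i>*p)^2 = p * (p - \<i>*x)" for x
            unfolding sq by (simp add: algebra_simps power2_eq_square)
          show ?thesis
            apply (simp only: n useq.simps(4) IH grec[OF assms] Let_def e2)
            apply (simp add: sq)
            done
        qed
      qed
    qed
  qed
qed

lemma v_eq:
  fixes a b c p :: complex
  assumes "\<forall>k::nat. c \<noteq> - of_nat k"
  shows "vseq a b c p n = fps_nth (fps_exp (-(\<i>*p)) * Abs_fps (fco a b c)) n"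
proof (induction n rule: less_induct)
  case (less n)
  let ?G = "fps_exp (-(\<i>*p)) * Abs_fps (fco a b c)"
  show ?case
  proof (cases n)
    case 0 then show ?thesis using g012[OF assms] by simp
  next
    case (Suc n1)
    show ?thesis
    proof (cases n1)
      case 0 then show ?thesis using g012[OF assms, of "-(\<i>*p)"] Suc by simp
    next
      case (Suc n2) note n1 = \<open>n = Suc n1\<close>
      show ?thesis
      proof (cases n2)
        case 0 then show ?thesis using g012[OF assms, of "-(\<i>*p)"] Suc n1
        proof -
          have sq: "(-(\<i>*p))^2 = -(p^2)" by (simp add: power_mult_distrib)
          have "n = 2" using 0 Suc n1 by simp
          then show ?thesis using g012(3)[OF assms, of "-(\<i>*p)" a b] unfolding sq
            by (simp add: numeral_2_eq_2 mult_ac)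
        qed
      next
        case (Suc m)
        have n: "n = Suc (Suc (Suc m))" using Suc \<open>n1 = Suc n2\<close> n1 by simp
        have IH: "vseq a b c p m = fps_nth ?G m" "vseq a b c p (Suc m) = fps_nth ?G (Suc m)"
          "vseq a b c p (Suc (Suc m)) = fps_nth ?G (Suc (Suc m))" using less n by auto
        show ?thesis
        proof -
          have sq: "(-(\<i>*p))^2 = -(p^2)" by (simp add: power_mult_distrib)
          have e2: "- (-(\<i>*p)) * x - (-(\<i>*p))^2 = p * (p + \<i>*x)" for x
            unfolding sq by (simp add: algebra_simps power2_eq_square)
          show ?thesis
            apply (simp only: n vseq.simps(4) IH grec[OF assms] Let_def e2)
            apply (simp add: sq power_mult_distrib)
            done
        qed
      qed
    qed
  qed
qed

lemma ratio_lim: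
  fixes a b c :: complex
  shows "(\<lambda>n. (a + of_nat n) * (b + of_nat n) / ((of_nat n + 1) * (c + of_nat n))) \<longlonglongrightarrow> 1"
proof -
  have t: "(\<lambda>n. (1 + a / of_nat n) * (1 + b / of_nat n) / ((1 + 1 / of_nat n) * (1 + c / of_nat n))) \<longlonglongrightarrow> (1 + 0) * (1 + 0) / ((1 + 0) * (1 + 0::complex))"
    by (intro tendsto_intros lim_const_over_n) simp
  have ev: "eventually (\<lambda>n. (1 + a / of_nat n) * (1 + b / of_nat n) / ((1 + 1 / of_nat n) * (1 + c / of_nat n))
     = (a + of_nat n) * (b + of_nat n) / ((of_nat n + 1) * (c + of_nat n))) sequentially"
    using eventually_gt_at_top[of "0::nat"]
  proof eventually_elim
    case (elim n)
    then have n0: "(of_nat n :: complex) \<noteq> 0" by simp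
    have "(1 + a / of_nat n) * (1 + b / of_nat n) = (a + of_nat n) * (b + of_nat n) / (of_nat n * of_nat n)"
      using n0 by (simp add: field_simps)
    moreover have "(1 + 1 / of_nat n) * (1 + c / of_nat n) = (of_nat n + 1) * (c + of_nat n) / (of_nat n * of_nat n)"
      using n0 by (simp add: field_simps)
    ultimately show ?case using n0 by simp
  qed
  show ?thesis using t tendsto_cong[OF ev] by simp
qed

lemma F_abs_summable:
  fixes a b c z :: complex
  assumes "\<forall>k::nat. c \<noteq> - of_nat k" and "norm z < 1"
  shows "summable (\<lambda>n. norm (fco a b c n * z ^ n))"
proof -
  define r where "r = (1 + norm z) / 2"
  have r1: "r < 1" and rz: "norm z < r" using assms(2) by (auto simp: r_def)
  have "(\<lambda>n. norm ((a + of_nat n) * (b + of_nat n) / ((of_nat n + 1) * (c + of_nat n))) * norm z) \<longlonglongrightarrow> 1 * norm z"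
    by (intro tendsto_intros tendsto_norm ratio_lim[THEN tendsto_norm, simplified])
  then have "eventually (\<lambda>n. norm ((a + of_nat n) * (b + of_nat n) / ((of_nat n + 1) * (c + of_nat n))) * norm z < r) sequentially"
    using rz by (intro order_tendstoD(2)) auto
  then obtain N where N: "\<And>n. n \<ge> N \<Longrightarrow> norm ((a + of_nat n) * (b + of_nat n) / ((of_nat n + 1) * (c + of_nat n))) * norm z < r"
    unfolding eventually_sequentially by blast
  show ?thesis
  proof (rule summable_ratio_test[OF r1])
    fix n assume "n \<ge> N"
    have "norm (norm (fco a b c (Suc n) * z ^ Suc n)) = norm (fco a b c n * z ^ n) * (norm ((a + of_nat n) * (b + of_nat n) / ((of_nat n + 1) * (c + of_nat n))) * norm z)"
      unfolding fco_Suc[OF assms(1)] by (simp add: norm_mult norm_divide norm_power)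
    also have "\<dots> \<le> norm (fco a b c n * z ^ n) * r"
      using N[OF \<open>n \<ge> N\<close>] by (intro mult_left_mono) auto
    finally show "norm (norm (fco a b c (Suc n) * z ^ Suc n)) \<le> r * norm (norm (fco a b c n * z ^ n))"
      by (simp add: mult.commute)
  qed
qed

lemma G_sums:
  fixes a b c z q :: complex
  assumes "\<forall>k::nat. c \<noteq> - of_nat k" and "norm z < 1"
  shows "(\<lambda>n. fps_nth (fps_exp q * Abs_fps (fco a b c)) n * z ^ n) sums (exp (q * z) * hyp2F1 a b c z)"
proof -
  have e: "(q*z)^n /\<^sub>R fact n = (q*z)^n / fact n" for n
    by (simp add: scaleR_conv_of_real divide_inverse mult.commute)
  have s1: "summable (\<lambda>n. norm ((q*z)^n / fact n))"
    using summable_norm_exp[of "q*z"] unfolding e .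
  have ex: "(\<Sum>n. (q*z)^n / fact n) = exp (q*z)"
    using exp_converges[of "q*z"] unfolding e by (simp add: sums_iff)
  have hf: "hyp2F1 a b c z = (\<Sum>n. fco a b c n * z ^ n)"
    unfolding hyp2F1_def fco_def ..
  have "(\<lambda>k. \<Sum>i\<le>k. (q*z)^i / fact i * (fco a b c (k - i) * z ^ (k - i))) sums ((\<Sum>n. (q*z)^n / fact n) * (\<Sum>n. fco a b c n * z ^ n))"
    by (rule Cauchy_product_sums[OF s1 F_abs_summable[OF assms]])
  moreover have "(\<Sum>i\<le>k. (q*z)^i / fact i * (fco a b c (k - i) * z ^ (k - i))) = fps_nth (fps_exp q * Abs_fps (fco a b c)) k * z ^ k" for k
  proof -
    have "(\<Sum>i\<le>k. (q*z)^i / fact i * (fco a b c (k - i) * z ^ (k - i))) = (\<Sum>i=0..k. q^i / fact i * fco a b c (k-i) * z ^ k)"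
      unfolding atMost_atLeast0
    proof (rule sum.cong[OF refl])
      fix i assume "i \<in> {0..k}"
      then have "z ^ k = z ^ i * z ^ (k - i)" by (simp add: power_add[symmetric])
      then show "(q*z)^i / fact i * (fco a b c (k - i) * z ^ (k - i)) = q^i / fact i * fco a b c (k-i) * z ^ k"
        by (simp add: power_mult_distrib)
    qed
    also have "\<dots> = fps_nth (fps_exp q * Abs_fps (fco a b c)) k * z ^ k"
      unfolding gnth sum_distrib_right ..
    finally show ?thesis .
  qed
  ultimately show ?thesis unfolding ex hf[symmetric] by simp
qed

theorem theorem3p4:
  fixes a b c p z :: complex
  assumes "\<forall>k::nat. c \<noteq> - of_nat k"
    and "norm z < 1"
  shows "(\<lambda>n. (useq a b c p n - vseq a b c p n) / (2 * \<i>) * z ^ n)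
           sums (sin (p * z) * hyp2F1 a b c z)"
proof -
  have "(\<lambda>n. (fps_nth (fps_exp (\<i>*p) * Abs_fps (fco a b c)) n * z ^ n - fps_nth (fps_exp (-(\<i>*p)) * Abs_fps (fco a b c)) n * z ^ n) / (2 * \<i>))
     sums ((exp (\<i>*p * z) * hyp2F1 a b c z - exp (-(\<i>*p) * z) * hyp2F1 a b c z) / (2 * \<i>))"
    (is "?f sums ?X") by (intro sums_divide sums_diff G_sums assms)
  moreover have "sin (p * z) * hyp2F1 a b c z = (exp (\<i>*p * z) * hyp2F1 a b c z - exp (-(\<i>*p) * z) * hyp2F1 a b c z) / (2 * \<i>)"
    unfolding sin_exp_eq by (simp add: algebra_simps diff_divide_distrib)
  moreover have "(\<lambda>n. (useq a b c p n - vseq a b c p n) / (2 * \<i>) * z ^ n) = ?f"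
    unfolding u_eq[OF assms(1)] v_eq[OF assms(1)] by (rule ext) (simp add: algebra_simps diff_divide_distrib)
  ultimately show ?thesis by simp
qed

end
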